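(* Let $\Gamma=(V,E)$ be a connected graph of valency at least $3$, $G\leqslant\mathrm{Aut}(\Gamma)$, and assume $\Gamma$ is $(G,2)$-arc-transitive. Let $G^*=\langle G_{\alpha_1},G_{\alpha_2}\rangle$ for some $\{\alpha_1,\alpha_2\}\in E$ and $M=\mathrm{soc}(G^* )$, and assume $G^*$ is a quasiprimitive group of PA type on each of its orbits on $V$, so that $M=T_1\times\cdots\times T_n$ is the unique minimal normal subgroup of $G^*$, with $n\geqslant2$ and the $T_i$ pairwise isomorphic nonabelian simple groups, and for each $\alpha\in V$ there are subgroups $R_i<T_i$ with $M_\alpha\leqslant R_1\times\cdots\times R_n$ such that every projection $\pi_i:M_\alpha\to R_i$ is surjective. Assume $\Gamma$ is $M$-locally primitive. Then every $\pi_i$ is injective; in particular, $M_\alpha\cong R_i$ for all $i$.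
   Context: Graphs are finite, simple and undirected; $G_\alpha$ is a vertex stabilizer and $\Gamma(\alpha)$ the neighbourhood of $\alpha$. A $2$-arc is a triple $(\alpha,\beta,\gamma)$ of distinct vertices with $\{\alpha,\beta\},\{\beta,\gamma\}\in E$, and $(G,2)$-arc-transitive means $G$ is transitive on $2$-arcs. A permutation group is quasiprimitive if each minimal normal subgroup is transitive. $\mathrm{soc}(X)$ is the subgroup generated by all minimal normal subgroups of $X$. $\Gamma$ is $M$-locally primitive if $M_\gamma$ acts primitively on $\Gamma(\gamma)$ for every vertex $\gamma$. *)

theory Defs
  imports Main
begin

definition simple_graph :: "'a set \<Rightarrow> ('a \<Rightarrow> 'a \<Rightarrow> bool) \<Rightarrow> bool" where
  "simple_graph V E \<longleftrightarrow> finite V \<and> (\<forall>x y. E x y \<longrightarrow> x \<in> V \<and> y \<in> V)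
     \<and> (\<forall>x y. E x y \<longrightarrow> E y x) \<and> (\<forall>x. \<not> E x x)"

definition nbhd :: "('a \<Rightarrow> 'a \<Rightarrow> bool) \<Rightarrow> 'a \<Rightarrow> 'a set" where
  "nbhd E a = {b. E a b}"

definition connected_graph :: "'a set \<Rightarrow> ('a \<Rightarrow> 'a \<Rightarrow> bool) \<Rightarrow> bool" where
  "connected_graph V E \<longleftrightarrow> V \<noteq> {} \<and> (\<forall>x\<in>V. \<forall>y\<in>V. E\<^sup>*\<^sup>* x y)"

definition perm_on :: "'a set \<Rightarrow> ('a \<Rightarrow> 'a) \<Rightarrow> bool" where
  "perm_on V f \<longleftrightarrow> bij_betw f V V \<and> (\<forall>x. x \<notin> V \<longrightarrow> f x = x)"

definition perm_group :: "'a set \<Rightarrow> ('a \<Rightarrow> 'a) set \<Rightarrow> bool" where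
  "perm_group V H \<longleftrightarrow> (\<forall>h\<in>H. perm_on V h) \<and> id \<in> H
     \<and> (\<forall>g\<in>H. \<forall>h\<in>H. g \<circ> h \<in> H) \<and> (\<forall>h\<in>H. inv h \<in> H)"

definition subgrp :: "'a set \<Rightarrow> ('a \<Rightarrow> 'a) set \<Rightarrow> ('a \<Rightarrow> 'a) set \<Rightarrow> bool" where
  "subgrp V K H \<longleftrightarrow> perm_group V K \<and> K \<subseteq> H"

definition gen :: "'a set \<Rightarrow> ('a \<Rightarrow> 'a) set \<Rightarrow> ('a \<Rightarrow> 'a) set" where
  "gen V S = \<Inter> {H. perm_group V H \<and> S \<subseteq> H}"

definition normal_sub :: "'a set \<Rightarrow> ('a \<Rightarrow> 'a) set \<Rightarrow> ('a \<Rightarrow> 'a) set \<Rightarrow> bool" where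
  "normal_sub V N H \<longleftrightarrow> subgrp V N H \<and> (\<forall>h\<in>H. \<forall>m\<in>N. h \<circ> m \<circ> inv h \<in> N)"

definition minimal_normal :: "'a set \<Rightarrow> ('a \<Rightarrow> 'a) set \<Rightarrow> ('a \<Rightarrow> 'a) set \<Rightarrow> bool" where
  "minimal_normal V N H \<longleftrightarrow> normal_sub V N H \<and> N \<noteq> {id}
     \<and> (\<forall>K. normal_sub V K H \<and> K \<subseteq> N \<longrightarrow> K = {id} \<or> K = N)"

definition soc :: "'a set \<Rightarrow> ('a \<Rightarrow> 'a) set \<Rightarrow> ('a \<Rightarrow> 'a) set" where
  "soc V H = gen V (\<Union> {N. minimal_normal V N H})"

definition stab :: "('a \<Rightarrow> 'a) set \<Rightarrow> 'a \<Rightarrow> ('a \<Rightarrow> 'a) set" where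
  "stab H a = {h \<in> H. h a = a}"

definition orbit :: "('a \<Rightarrow> 'a) set \<Rightarrow> 'a \<Rightarrow> 'a set" where
  "orbit H a = {h a | h. h \<in> H}"

definition transitive_on :: "('a \<Rightarrow> 'a) set \<Rightarrow> 'a set \<Rightarrow> bool" where
  "transitive_on H \<Omega> \<longleftrightarrow> (\<forall>x\<in>\<Omega>. \<forall>y\<in>\<Omega>. \<exists>h\<in>H. h x = y)"

text \<open>Primitivity of H on a set \<Omega> (which H is assumed to stabilise):
  transitive, and no block other than trivial ones.\<close>
definition primitive_on :: "('a \<Rightarrow> 'a) set \<Rightarrow> 'a set \<Rightarrow> bool" where
  "primitive_on H \<Omega> \<longleftrightarrow> \<Omega> \<noteq> {} \<and> transitive_on H \<Omega>
     \<and> (\<forall>B. B \<subseteq> \<Omega> \<and> (\<forall>h\<in>H. h ` B = B \<or> h ` B \<inter> B = {})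
            \<longrightarrow> card B \<le> 1 \<or> B = \<Omega>)"

text \<open>Quasiprimitivity of H on an orbit \<Delta>: every normal subgroup of H acts
  either trivially or transitively on \<Delta> (equivalently, every minimal normal
  subgroup of the induced group H^\<Delta> is transitive).\<close>
definition quasiprimitive_on :: "'a set \<Rightarrow> ('a \<Rightarrow> 'a) set \<Rightarrow> 'a set \<Rightarrow> bool" where
  "quasiprimitive_on V H \<Delta> \<longleftrightarrow> transitive_on H \<Delta> \<and>
     (\<forall>N. normal_sub V N H \<longrightarrow> (\<forall>n\<in>N. \<forall>x\<in>\<Delta>. n x = x) \<or> transitive_on N \<Delta>)"

definition is_aut :: "'a set \<Rightarrow> ('a \<Rightarrow> 'a \<Rightarrow> bool) \<Rightarrow> ('a \<Rightarrow> 'a) \<Rightarrow> bool" where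
  "is_aut V E g \<longleftrightarrow> perm_on V g \<and> (\<forall>x y. E x y \<longleftrightarrow> E (g x) (g y))"

definition aut_subgroup :: "'a set \<Rightarrow> ('a \<Rightarrow> 'a \<Rightarrow> bool) \<Rightarrow> ('a \<Rightarrow> 'a) set \<Rightarrow> bool" where
  "aut_subgroup V E G \<longleftrightarrow> perm_group V G \<and> (\<forall>g\<in>G. is_aut V E g)"

definition two_arc :: "('a \<Rightarrow> 'a \<Rightarrow> bool) \<Rightarrow> 'a \<times> 'a \<times> 'a \<Rightarrow> bool" where
  "two_arc E t \<longleftrightarrow> (case t of (a, b, c) \<Rightarrow> E a b \<and> E b c \<and> a \<noteq> c \<and> a \<noteq> b \<and> b \<noteq> c)"

definition two_arc_transitive ::
  "('a \<Rightarrow> 'a \<Rightarrow> bool) \<Rightarrow> ('a \<Rightarrow> 'a) set \<Rightarrow> bool" where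
  "two_arc_transitive E G \<longleftrightarrow>
     (\<forall>a b c a' b' c'. two_arc E (a, b, c) \<and> two_arc E (a', b', c')
        \<longrightarrow> (\<exists>g\<in>G. g a = a' \<and> g b = b' \<and> g c = c'))"

definition locally_primitive ::
  "'a set \<Rightarrow> ('a \<Rightarrow> 'a \<Rightarrow> bool) \<Rightarrow> ('a \<Rightarrow> 'a) set \<Rightarrow> bool" where
  "locally_primitive V E M \<longleftrightarrow> (\<forall>c\<in>V. primitive_on (stab M c) (nbhd E c))"

definition nonabelian_simple :: "'a set \<Rightarrow> ('a \<Rightarrow> 'a) set \<Rightarrow> bool" where
  "nonabelian_simple V T \<longleftrightarrow> perm_group V T \<and> T \<noteq> {id}
     \<and> (\<exists>a\<in>T. \<exists>b\<in>T. a \<circ> b \<noteq> b \<circ> a)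
     \<and> (\<forall>K. normal_sub V K T \<longrightarrow> K = {id} \<or> K = T)"

definition grp_iso :: "('a \<Rightarrow> 'a) set \<Rightarrow> ('a \<Rightarrow> 'a) set \<Rightarrow> bool" where
  "grp_iso A B \<longleftrightarrow> (\<exists>\<phi>. bij_betw \<phi> A B \<and> (\<forall>x\<in>A. \<forall>y\<in>A. \<phi> (x \<circ> y) = \<phi> x \<circ> \<phi> y))"

definition compl_factors :: "'a set \<Rightarrow> (nat \<Rightarrow> ('a \<Rightarrow> 'a) set) \<Rightarrow> nat \<Rightarrow> nat \<Rightarrow> ('a \<Rightarrow> 'a) set" where
  "compl_factors V T n i = gen V (\<Union> {T j | j. j < n \<and> j \<noteq> i})"

definition internal_direct_product ::
  "'a set \<Rightarrow> ('a \<Rightarrow> 'a) set \<Rightarrow> (nat \<Rightarrow> ('a \<Rightarrow> 'a) set) \<Rightarrow> nat \<Rightarrow> bool" where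
  "internal_direct_product V M T n \<longleftrightarrow>
     perm_group V M \<and> (\<forall>i<n. normal_sub V (T i) M)
     \<and> (\<forall>i<n. T i \<inter> compl_factors V T n i = {id})
     \<and> M = gen V (\<Union> {T i | i. i < n})"

definition proj :: "'a set \<Rightarrow> (nat \<Rightarrow> ('a \<Rightarrow> 'a) set) \<Rightarrow> nat \<Rightarrow> nat \<Rightarrow> ('a \<Rightarrow> 'a) \<Rightarrow> ('a \<Rightarrow> 'a)" where
  "proj V T n i m = (THE t. t \<in> T i \<and> (\<exists>s\<in>compl_factors V T n i. m = t \<circ> s))"

end

theory Submission
  imports Defs
begin

lemma perm_on_bij: "perm_on V f \<Longrightarrow> bij f"
  unfolding perm_on_def bij_def inj_def surj_def
proof safe
  fix x y assume b: "bij_betw f V V" and o: "\<forall>x. x \<notin> V \<longrightarrow> f x = x" and e: "f x = f y"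
  show "x = y"
  proof (cases "x \<in> V"; cases "y \<in> V")
    assume "x \<in> V" "y \<in> V" thus ?thesis using b e by (metis bij_betw_iff_bijections)
  next
    assume "x \<in> V" "y \<notin> V" thus ?thesis using b e o by (metis bij_betw_apply)
  next
    assume "x \<notin> V" "y \<in> V" thus ?thesis using b e o by (metis bij_betw_apply)
  next
    assume "x \<notin> V" "y \<notin> V" thus ?thesis using e o by metis
  qed
next
  fix y assume b: "bij_betw f V V" and o: "\<forall>x. x \<notin> V \<longrightarrow> f x = x"
  show "\<exists>x. y = f x"
  proof (cases "y \<in> V")
    case True then show ?thesis using b by (metis bij_betw_imp_surj_on imageE)
  next
    case False then show ?thesis using o by metis
  qed
qed

lemma bij_inv_simps:
  assumes "bij f"
  shows "inv f (f x) = x" "f (inv f x) = x" "inv f \<circ> f = id" "f \<circ> inv f = id"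
  using assms by (auto simp: bij_is_inj bij_is_surj surj_f_inv_f fun_eq_iff)

lemma perm_on_in: "perm_on V f \<Longrightarrow> x \<in> V \<Longrightarrow> f x \<in> V"
  unfolding perm_on_def by (metis bij_betw_apply)

lemma pg_perm: "perm_group V H \<Longrightarrow> h \<in> H \<Longrightarrow> perm_on V h"
  and pg_id: "perm_group V H \<Longrightarrow> id \<in> H"
  and pg_comp: "perm_group V H \<Longrightarrow> g \<in> H \<Longrightarrow> h \<in> H \<Longrightarrow> g \<circ> h \<in> H"
  and pg_inv: "perm_group V H \<Longrightarrow> h \<in> H \<Longrightarrow> inv h \<in> H"
  unfolding perm_group_def by auto

lemma pg_bij: "perm_group V H \<Longrightarrow> h \<in> H \<Longrightarrow> bij h"
  using pg_perm perm_on_bij by blast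

lemma gen_sub: "S \<subseteq> gen V S"
  unfolding gen_def by auto

lemma gen_min: "perm_group V H \<Longrightarrow> S \<subseteq> H \<Longrightarrow> gen V S \<subseteq> H"
  unfolding gen_def by auto

lemma gen_pg: assumes "perm_group V H" "S \<subseteq> H" shows "perm_group V (gen V S)"
proof -
  have sub: "gen V S \<subseteq> H" using gen_min assms by blast
  show ?thesis unfolding perm_group_def
  proof (intro conjI ballI)
    fix h assume "h \<in> gen V S" then show "perm_on V h" using sub assms pg_perm by blast
  next
    show "id \<in> gen V S" unfolding gen_def by (auto simp: perm_group_def)
  next
    fix g h assume "g \<in> gen V S" "h \<in> gen V S" then show "g \<circ> h \<in> gen V S"
      unfolding gen_def by (auto simp: perm_group_def)
  next
    fix h assume "h \<in> gen V S" then show "inv h \<in> gen V S"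
      unfolding gen_def by (auto simp: perm_group_def)
  qed
qed

lemma relpow_aut: "is_aut V E g \<Longrightarrow> (E ^^ k) x y \<Longrightarrow> (E ^^ k) (g x) (g y)"
proof (induction k arbitrary: y)
  case 0 then show ?case by simp
next
  case (Suc k)
  from Suc.prems(2) obtain z where "(E ^^ k) x z" "E z y" by (auto elim: relpowp_Suc_E)
  then have "(E ^^ k) (g x) (g z)" "E (g z) (g y)" using Suc is_aut_def by metis+
  then show ?case by (rule relpowp_Suc_I)
qed

lemma relpow_sym: "(\<forall>x y. E x y \<longrightarrow> E y x) \<Longrightarrow> (E ^^ k) x y \<Longrightarrow> (E ^^ k) y x"
proof (induction k arbitrary: y)
  case 0 then show ?case by simp
next
  case (Suc k)
  from Suc.prems(2) obtain z where "(E ^^ k) x z" "E z y" by (auto elim: relpowp_Suc_E)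
  then have "E y z" "(E ^^ k) z x" using Suc by metis+
  then show ?case by (rule relpowp_Suc_I2)
qed

theorem lemma4p2:
  fixes V :: "'a set" and E :: "'a \<Rightarrow> 'a \<Rightarrow> bool"
    and G Gstar M :: "('a \<Rightarrow> 'a) set"
    and T :: "nat \<Rightarrow> ('a \<Rightarrow> 'a) set" and n :: nat
    and a1 a2 :: 'a
  assumes graph: "simple_graph V E"
    and conn: "connected_graph V E"
    and val: "\<forall>a\<in>V. card (nbhd E a) \<ge> 3"
    and aut: "aut_subgroup V E G"
    and arc2: "two_arc_transitive E G"
    and edge: "E a1 a2"
    and Gstar_def: "Gstar = gen V (stab G a1 \<union> stab G a2)"
    and M_def: "M = soc V Gstar"
    and qp: "\<forall>x\<in>V. quasiprimitive_on V Gstar (orbit Gstar x)"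
    and M_unique: "minimal_normal V M Gstar \<and> (\<forall>N. minimal_normal V N Gstar \<longrightarrow> N = M)"
    and n_ge: "n \<ge> 2"
    and dprod: "internal_direct_product V M T n"
    and simple: "\<forall>i<n. nonabelian_simple V (T i)"
    and isom: "\<forall>i<n. \<forall>j<n. grp_iso (T i) (T j)"
    and PA: "\<forall>a\<in>V. \<exists>R :: nat \<Rightarrow> ('a \<Rightarrow> 'a) set.
               (\<forall>i<n. subgrp V (R i) (T i) \<and> R i \<noteq> T i)
             \<and> stab M a \<subseteq> {m \<in> M. \<forall>i<n. proj V T n i m \<in> R i}
             \<and> (\<forall>i<n. proj V T n i ` stab M a = R i)"
    and lp: "locally_primitive V E M"
  shows "\<forall>a\<in>V. \<forall>i<n. inj_on (proj V T n i) (stab M a)"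
proof (intro ballI allI impI)
  fix a i assume aV: "a \<in> V" and iN: "i < n"
  have sym: "\<forall>x y. E x y \<longrightarrow> E y x" and EV: "\<And>x y. E x y \<Longrightarrow> x \<in> V \<and> y \<in> V"
    and finV: "finite V"
    using graph unfolding simple_graph_def by auto
  have Gpg: "perm_group V G" and Gaut: "\<forall>g\<in>G. is_aut V E g"
    using aut unfolding aut_subgroup_def by auto
  have GsG: "Gstar \<subseteq> G" unfolding Gstar_def by (rule gen_min[OF Gpg]) (auto simp: stab_def)
  have Gspg: "perm_group V Gstar" unfolding Gstar_def by (rule gen_pg[OF Gpg]) (auto simp: stab_def)
  have Mnormal: "normal_sub V M Gstar"
    and Mmin: "\<And>K. normal_sub V K Gstar \<Longrightarrow> K \<subseteq> M \<Longrightarrow> K = {id} \<or> K = M"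
    using M_unique unfolding minimal_normal_def by auto
  have Mpg: "perm_group V M" and MGs: "M \<subseteq> Gstar"
    using Mnormal unfolding normal_sub_def subgrp_def by auto
  have Mconj: "\<And>h m. h \<in> Gstar \<Longrightarrow> m \<in> M \<Longrightarrow> h \<circ> m \<circ> inv h \<in> M"
    using Mnormal unfolding normal_sub_def by auto
  have Gsaut: "\<And>g. g \<in> Gstar \<Longrightarrow> is_aut V E g" using GsG Gaut by blast
  have Maut: "\<And>m. m \<in> M \<Longrightarrow> is_aut V E m" using MGs Gsaut by blast
  have Mbij: "\<And>m. m \<in> M \<Longrightarrow> bij m" using pg_bij[OF Mpg] by blast
  have Minv: "\<And>m. m \<in> M \<Longrightarrow> inv m \<in> M" using pg_inv[OF Mpg] by blast
  have Mcomp: "\<And>m h. m \<in> M \<Longrightarrow> h \<in> M \<Longrightarrow> m \<circ> h \<in> M" using pg_comp[OF Mpg] by blast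
  have Mid: "id \<in> M" using pg_id[OF Mpg] .
  have MV: "\<And>m x. m \<in> M \<Longrightarrow> x \<in> V \<Longrightarrow> m x \<in> V" by (rule perm_on_in[OF pg_perm[OF Mpg]])
  have ME: "\<And>m x y. m \<in> M \<Longrightarrow> E x y \<longleftrightarrow> E (m x) (m y)"
  proof -
    fix m x y assume "m \<in> M"
    from Maut[OF this] have "\<forall>x y. E x y \<longleftrightarrow> E (m x) (m y)" unfolding is_aut_def by (rule conjunct2)
    then show "E x y \<longleftrightarrow> E (m x) (m y)" by (elim allE)
  qed
  define X where "X = compl_factors V T n i"
  have Tnorm: "\<And>j. j < n \<Longrightarrow> normal_sub V (T j) M" and Tint: "T i \<inter> X = {id}"
    and Mgen: "M = gen V (\<Union> {T i | i. i < n})"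
    using dprod iN unfolding internal_direct_product_def X_def by auto
  have TM: "\<And>j. j<n \<Longrightarrow> T j \<subseteq> M" using Tnorm unfolding normal_sub_def subgrp_def by simp
  have Tpg: "\<And>j. j<n \<Longrightarrow> perm_group V (T j)" using Tnorm unfolding normal_sub_def subgrp_def by simp
  have Tconj: "\<And>j m t. j<n \<Longrightarrow> m\<in>M \<Longrightarrow> t \<in> T j \<Longrightarrow> m \<circ> t \<circ> inv m \<in> T j"
    using Tnorm unfolding normal_sub_def by simp
  have Xsub: "\<Union>{T j |j. j < n \<and> j \<noteq> i} \<subseteq> M" using TM by blast
  have Xpg: "perm_group V X" unfolding X_def compl_factors_def by (rule gen_pg[OF Mpg Xsub])
  have XM: "X \<subseteq> M" unfolding X_def compl_factors_def by (rule gen_min[OF Mpg Xsub])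
  have Xcomp: "\<And>m h. m \<in> X \<Longrightarrow> h \<in> X \<Longrightarrow> m \<circ> h \<in> X" using pg_comp[OF Xpg] by blast
  have Xinv: "\<And>m. m \<in> X \<Longrightarrow> inv m \<in> X" using pg_inv[OF Xpg] by blast
  have Xid: "id \<in> X" using pg_id[OF Xpg] .
  have TjX: "\<And>j. j < n \<Longrightarrow> j \<noteq> i \<Longrightarrow> T j \<subseteq> X"
  proof -
    fix j assume j: "j < n" "j \<noteq> i"
    have "T j \<subseteq> \<Union>{T j |j. j < n \<and> j \<noteq> i}" using j by blast
    also have "\<dots> \<subseteq> X" unfolding X_def compl_factors_def by (rule gen_sub)
    finally show "T j \<subseteq> X" .
  qed
  have Xconj: "\<And>m x. m \<in> M \<Longrightarrow> x \<in> X \<Longrightarrow> m \<circ> x \<circ> inv m \<in> X"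
  proof -
    define N where "N = {s \<in> X. \<forall>m\<in>M. m \<circ> s \<circ> inv m \<in> X}"
    have "perm_group V N" unfolding perm_group_def
    proof (intro conjI ballI)
      fix h assume "h \<in> N" then show "perm_on V h" using N_def pg_perm[OF Xpg] by blast
    next
      show "id \<in> N" unfolding N_def using Xid Mbij by (auto simp: bij_inv_simps)
    next
      fix g h assume g: "g \<in> N" and h: "h \<in> N"
      show "g \<circ> h \<in> N" unfolding N_def
      proof (intro CollectI conjI ballI)
        show "g \<circ> h \<in> X" using g h N_def Xcomp by blast
        fix m assume m: "m \<in> M"
        have "m \<circ> (g \<circ> h) \<circ> inv m = (m \<circ> g \<circ> inv m) \<circ> (m \<circ> h \<circ> inv m)"
          using Mbij[OF m] by (simp add: fun_eq_iff bij_inv_simps)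
        then show "m \<circ> (g \<circ> h) \<circ> inv m \<in> X" using g h m N_def Xcomp by auto
      qed
    next
      fix h assume h: "h \<in> N"
      show "inv h \<in> N" unfolding N_def
      proof (intro CollectI conjI ballI)
        show "inv h \<in> X" using h N_def Xinv by blast
        fix m assume m: "m \<in> M"
        have bh: "bij h" using h N_def pg_bij[OF Xpg] by blast
        have "m \<circ> inv h \<circ> inv m = inv (m \<circ> h \<circ> inv m)"
          using Mbij[OF m] bh
          by (simp add: o_inv_distrib bij_imp_bij_inv bij_comp inv_inv_eq o_assoc)
        then show "m \<circ> inv h \<circ> inv m \<in> X" using h m N_def Xinv by auto
      qed
    qed
    moreover have "\<Union>{T j |j. j < n \<and> j \<noteq> i} \<subseteq> N"
    proof
      fix x assume "x \<in> \<Union>{T j |j. j < n \<and> j \<noteq> i}"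
      then obtain j where j: "j<n" "j\<noteq>i" "x \<in> T j" by blast
      have XS: "T j \<subseteq> X" using TjX j by blast
      show "x \<in> N" unfolding N_def using j Tconj[OF j(1) _ j(3)] XS by blast
    qed
    ultimately have "X \<subseteq> N" unfolding X_def compl_factors_def by (rule gen_min)
    then show "\<And>m x. m \<in> M \<Longrightarrow> x \<in> X \<Longrightarrow> m \<circ> x \<circ> inv m \<in> X" unfolding N_def by blast
  qed
  have Xconj': "\<And>m x. m \<in> M \<Longrightarrow> x \<in> X \<Longrightarrow> inv m \<circ> x \<circ> m \<in> X"
    using Xconj Minv Mbij by (metis inv_inv_eq)
  have Ti: "T i \<subseteq> M" using TM iN .
  have Tipg: "perm_group V (T i)" using Tpg iN .
  have Ticomp: "\<And>m h. m \<in> T i \<Longrightarrow> h \<in> T i \<Longrightarrow> m \<circ> h \<in> T i" using pg_comp[OF Tipg] by blast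
  have Tiinv: "\<And>m. m \<in> T i \<Longrightarrow> inv m \<in> T i" using pg_inv[OF Tipg] by blast
  have Tiid: "id \<in> T i" using pg_id[OF Tipg] .
  have decomp: "\<And>m. m \<in> M \<Longrightarrow> \<exists>t\<in>T i. \<exists>s\<in>X. m = t \<circ> s"
  proof -
    define P where "P = {t \<circ> s | t s. t \<in> T i \<and> s \<in> X}"
    have "perm_group V P" unfolding perm_group_def
    proof (intro conjI ballI)
      fix h assume "h \<in> P" then show "perm_on V h" using P_def pg_perm[OF Mpg] Mcomp Ti XM by blast
    next
      have "id = id \<circ> (id::'a\<Rightarrow>'a)" by simp
      then show "id \<in> P" unfolding P_def using Tiid Xid by blast
    next
      fix g h assume g: "g \<in> P" and h: "h \<in> P"
      then obtain t1 s1 t2 s2 where a: "g = t1 \<circ> s1" "h = t2 \<circ> s2" "t1 \<in> T i" "t2 \<in> T i" "s1 \<in> X" "s2 \<in> X"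
        unfolding P_def by blast
      have bt2: "bij t2" using a Ti Mbij by blast
      have "g \<circ> h = (t1 \<circ> t2) \<circ> ((inv t2 \<circ> s1 \<circ> t2) \<circ> s2)"
        using a bt2 by (simp add: fun_eq_iff bij_inv_simps)
      moreover have "(inv t2 \<circ> s1 \<circ> t2) \<circ> s2 \<in> X" using Xconj' a Ti Xcomp by blast
      ultimately show "g \<circ> h \<in> P" unfolding P_def using Ticomp a by blast
    next
      fix h assume h: "h \<in> P"
      then obtain t s where a: "h = t \<circ> s" "t \<in> T i" "s \<in> X" unfolding P_def by blast
      have bt: "bij t" "bij s" using a Ti XM Mbij by blast+
      have "inv h = inv s \<circ> inv t" unfolding a(1) using bt by (simp add: o_inv_distrib)
      also have "\<dots> = inv t \<circ> (t \<circ> inv s \<circ> inv t)" using bt by (simp add: fun_eq_iff bij_inv_simps)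
      finally have "inv h = inv t \<circ> (t \<circ> inv s \<circ> inv t)" .
      moreover have "t \<circ> inv s \<circ> inv t \<in> X" using Xconj a Ti Xinv by blast
      ultimately show "inv h \<in> P" unfolding P_def using Tiinv a by blast
    qed
    moreover have "\<Union> {T i | i. i < n} \<subseteq> P"
    proof
      fix x assume "x \<in> \<Union> {T i | i. i < n}"
      then obtain j where j: "j < n" "x \<in> T j" by blast
      show "x \<in> P"
      proof (cases "j = i")
        case True then have "x = x \<circ> id" "x \<in> T i" using j by auto
        then show ?thesis unfolding P_def using Xid by blast
      next
        case False then have "x = id \<circ> x" "x \<in> X" using j TjX by auto
        then show ?thesis unfolding P_def using Tiid by blast
      qed
    qed
    ultimately have "M \<subseteq> P" unfolding Mgen by (rule gen_min)
    then show "\<And>m. m \<in> M \<Longrightarrow> \<exists>t\<in>T i. \<exists>s\<in>X. m = t \<circ> s" unfolding P_def by blast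
  qed
  have uniq: "\<And>t1 t2 s1 s2. t1 \<in> T i \<Longrightarrow> t2 \<in> T i \<Longrightarrow> s1 \<in> X \<Longrightarrow> s2 \<in> X \<Longrightarrow>
      t1 \<circ> s1 = t2 \<circ> s2 \<Longrightarrow> t1 = t2"
  proof -
    fix t1 t2 s1 s2 assume a: "t1 \<in> T i" "t2 \<in> T i" "s1 \<in> X" "s2 \<in> X" "t1 \<circ> s1 = t2 \<circ> s2"
    have b: "bij t1" "bij t2" "bij s1" "bij s2" using a Ti XM Mbij by blast+
    have "inv t2 \<circ> t1 = s2 \<circ> inv s1"
    proof
      fix z
      have "t1 z = t1 (s1 (inv s1 z))" using b by (simp add: bij_inv_simps)
      also have "\<dots> = t2 (s2 (inv s1 z))" using a(5) by (metis comp_apply)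
      finally show "(inv t2 \<circ> t1) z = (s2 \<circ> inv s1) z" using b by (simp add: bij_inv_simps)
    qed
    moreover have "inv t2 \<circ> t1 \<in> T i" using a Tiinv Ticomp by blast
    moreover have "s2 \<circ> inv s1 \<in> X" using a Xinv Xcomp by blast
    ultimately have "inv t2 \<circ> t1 = id" using Tint by auto
    then show "t1 = t2" using b by (metis bij_inv_simps(2) comp_apply fun_eq_iff id_apply)
  qed
  have projeq: "\<And>m t s. t \<in> T i \<Longrightarrow> s \<in> X \<Longrightarrow> m = t \<circ> s \<Longrightarrow> proj V T n i m = t"
  proof -
    fix m t s assume a: "t \<in> T i" "s \<in> X" "m = t \<circ> s"
    show "proj V T n i m = t" unfolding proj_def X_def[symmetric]
    proof (rule the_equality)
      show "t \<in> T i \<and> (\<exists>s\<in>X. m = t \<circ> s)" using a by blast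
    next
      fix t' assume "t' \<in> T i \<and> (\<exists>s\<in>X. m = t' \<circ> s)"
      then show "t' = t" using uniq a by metis
    qed
  qed
  define K where "K = (\<lambda>d. {k \<in> M. k d = d \<and> k \<in> X})"
  have Kcomp: "\<And>d k h. k \<in> K d \<Longrightarrow> h \<in> K d \<Longrightarrow> k \<circ> h \<in> K d"
    unfolding K_def using Mcomp Xcomp by auto
  have Kinv: "\<And>d k. k \<in> K d \<Longrightarrow> inv k \<in> K d"
  proof -
    fix d k assume k: "k \<in> K d"
    then have "bij k" "k d = d" "k \<in> M" "k \<in> X" unfolding K_def using Mbij by auto
    then have "inv k d = d" by (metis bij_inv_simps(1))
    then show "inv k \<in> K d" unfolding K_def using Minv Xinv \<open>k \<in> M\<close> \<open>k \<in> X\<close> by auto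
  qed
  have Kid: "\<And>d. id \<in> K d" unfolding K_def using Mid Xid by auto
  have nbV: "\<And>d. nbhd E d \<subseteq> V" unfolding nbhd_def using EV by blast
  have nbfin: "\<And>d. finite (nbhd E d)" using nbV finV finite_subset by blast
  have dich: "\<And>d g. d \<in> V \<Longrightarrow> E d g \<Longrightarrow> (\<forall>k\<in>K d. k g = g) \<or> (\<forall>u. E d u \<longrightarrow> (\<exists>k\<in>K d. k g = u))"
  proof -
    fix d g assume dV: "d \<in> V" and dg: "E d g"
    define B where "B = (\<lambda>k. k g) ` K d"
    have prim: "primitive_on (stab M d) (nbhd E d)" using lp dV unfolding locally_primitive_def by blast
    have BN: "B \<subseteq> nbhd E d"
    proof
      fix x assume "x \<in> B" then obtain k where k: "k \<in> K d" "x = k g" unfolding B_def by blast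
      then have "k \<in> M" "k d = d" unfolding K_def by auto
      then have "E d x" using dg ME k(2) by metis
      then show "x \<in> nbhd E d" unfolding nbhd_def by simp
    qed
    have gB: "g \<in> B" unfolding B_def using Kid[of d] by (metis id_apply image_eqI)
    have blk: "\<forall>h\<in>stab M d. h ` B = B \<or> h ` B \<inter> B = {}"
    proof
      fix h assume h: "h \<in> stab M d"
      then have hM: "h \<in> M" and hd: "h d = d" unfolding stab_def by auto
      have bh: "bij h" using Mbij hM .
      show "h ` B = B \<or> h ` B \<inter> B = {}"
      proof (cases "h ` B \<inter> B = {}")
        case False
        then obtain k1 k2 where k12: "k1 \<in> K d" "k2 \<in> K d" "h (k1 g) = k2 g" unfolding B_def by auto
        have sub: "h ` B \<subseteq> B"
        proof
          fix x assume "x \<in> h ` B"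
          then obtain k where k: "k \<in> K d" "x = h (k g)" unfolding B_def by auto
          define c where "c = h \<circ> k \<circ> inv k1 \<circ> inv h"
          have kk: "k \<circ> inv k1 \<in> K d" using Kcomp Kinv k k12 by blast
          have cK: "c \<in> K d"
          proof -
            have "h \<circ> (k \<circ> inv k1) \<circ> inv h \<in> M" using Mcomp Minv hM kk unfolding K_def by auto
            moreover have "h \<circ> (k \<circ> inv k1) \<circ> inv h \<in> X" using Xconj hM kk unfolding K_def by auto
            moreover have "(h \<circ> (k \<circ> inv k1) \<circ> inv h) d = d"
            proof -
              have "inv h d = d" using hd bh by (metis bij_inv_simps(1))
              then show ?thesis using kk hd unfolding K_def by auto
            qed
            ultimately show ?thesis unfolding K_def c_def by (simp add: o_assoc)
          qed
          have bk1: "bij k1" using k12 Mbij unfolding K_def by auto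
          have "x = c (h (k1 g))" unfolding c_def k(2) using bh bk1 by (simp add: bij_inv_simps)
          also have "\<dots> = (c \<circ> k2) g" using k12 by simp
          finally show "x \<in> B" unfolding B_def using Kcomp cK k12 by blast
        qed
        have "inj_on h B" using bh bij_is_inj inj_on_subset by blast
        then have "card (h ` B) = card B" by (rule card_image)
        moreover have "finite B" using BN nbfin finite_subset by blast
        ultimately have "h ` B = B" using sub card_subset_eq by blast
        then show ?thesis by blast
      qed simp
    qed
    have "card B \<le> 1 \<or> B = nbhd E d" using prim BN blk unfolding primitive_on_def by blast
    then show "(\<forall>k\<in>K d. k g = g) \<or> (\<forall>u. E d u \<longrightarrow> (\<exists>k\<in>K d. k g = u))"
    proof
      assume "card B \<le> 1"
      moreover have "finite B" using BN nbfin finite_subset by blast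
      ultimately have "\<forall>x\<in>B. \<forall>y\<in>B. x = y" using card_le_Suc0_iff_eq by (metis One_nat_def)
      then have "\<forall>k\<in>K d. k g = g" using gB unfolding B_def by blast
      then show ?thesis by blast
    next
      assume "B = nbhd E d"
      have "\<forall>u. E d u \<longrightarrow> (\<exists>k\<in>K d. k g = u)"
      proof (intro allI impI)
        fix u assume "E d u"
        then have "u \<in> B" using \<open>B = nbhd E d\<close> unfolding nbhd_def by simp
        then show "\<exists>k\<in>K d. k g = u" unfolding B_def by auto
      qed
      then show ?thesis by blast
    qed
  qed
  define tr where "tr = (\<lambda>d. \<forall>u v. E d u \<longrightarrow> E d v \<longrightarrow> (\<exists>k\<in>K d. k u = v))"
  have dich2: "\<And>d. d \<in> V \<Longrightarrow> tr d \<or> (\<forall>k\<in>K d. \<forall>g. E d g \<longrightarrow> k g = g)"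
  proof -
    fix d assume dV: "d \<in> V"
    show "tr d \<or> (\<forall>k\<in>K d. \<forall>g. E d g \<longrightarrow> k g = g)"
    proof (cases "\<exists>g. E d g \<and> (\<forall>u. E d u \<longrightarrow> (\<exists>k\<in>K d. k g = u))")
      case True
      then obtain g where g: "E d g" "\<forall>u. E d u \<longrightarrow> (\<exists>k\<in>K d. k g = u)" by blast
      have "tr d" unfolding tr_def
      proof (intro allI impI)
        fix u v assume "E d u" "E d v"
        then obtain k1 k2 where k: "k1 \<in> K d" "k1 g = u" "k2 \<in> K d" "k2 g = v" using g by blast
        have "bij k1" using k Mbij unfolding K_def by auto
        then have "(k2 \<circ> inv k1) u = v" using k by (auto simp: bij_inv_simps)
        moreover have "k2 \<circ> inv k1 \<in> K d" using k Kcomp Kinv by blast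
        ultimately show "\<exists>k\<in>K d. k u = v" by blast
      qed
      then show ?thesis by blast
    next
      case False
      then show ?thesis using dich[OF dV] by blast
    qed
  qed
  have Kid_only: "\<forall>k\<in>K a. k = id"
  proof (cases "\<exists>d\<in>V. tr d")
    case False
    then have fixall: "\<And>d k g. d \<in> V \<Longrightarrow> k \<in> K d \<Longrightarrow> E d g \<Longrightarrow> k g = g" using dich2 by blast
    have propag: "\<And>c. E\<^sup>*\<^sup>* a c \<Longrightarrow> K a \<subseteq> K c"
    proof -
      fix c assume "E\<^sup>*\<^sup>* a c"
      then show "K a \<subseteq> K c"
      proof (induction rule: rtranclp_induct)
        case base then show ?case by simp
      next
        case (step y z)
        have yV: "y \<in> V" using EV step(2) by blast
        show ?case
        proof
          fix k assume "k \<in> K a"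
          then have "k \<in> K y" using step(3) by blast
          then have "k z = z" using fixall yV step(2) by blast
          then show "k \<in> K z" using \<open>k \<in> K y\<close> unfolding K_def by auto
        qed
      qed
    qed
    show ?thesis
    proof
      fix k assume k: "k \<in> K a"
      have "\<And>x. k x = x"
      proof -
        fix x show "k x = x"
        proof (cases "x \<in> V")
          case True
          then have "E\<^sup>*\<^sup>* a x" using conn aV unfolding connected_graph_def by blast
          then have "k \<in> K x" using propag k by blast
          then show ?thesis unfolding K_def by simp
        next
          case False
          have "perm_on V k" using k pg_perm[OF Mpg] unfolding K_def by blast
          then show ?thesis using False unfolding perm_on_def by blast
        qed
      qed
      then show "k = id" by (simp add: fun_eq_iff)
    qed
  next
    case True
    then obtain d where dV: "d \<in> V" and trd: "tr d" by blast
    have "nbhd E d \<noteq> {}" using lp dV unfolding locally_primitive_def primitive_on_def by blast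
    then obtain b where db: "E d b" unfolding nbhd_def by blast
    have bV: "b \<in> V" using EV db by blast
    have trM: "\<And>m. m \<in> M \<Longrightarrow> tr (m d)"
    proof -
      fix m assume m: "m \<in> M"
      have bm: "bij m" using Mbij m .
      show "tr (m d)" unfolding tr_def
      proof (intro allI impI)
        fix u v assume u: "E (m d) u" and v: "E (m d) v"
        have "E d (inv m u)" using ME[OF Minv[OF m], of "m d" u] u bm by (simp add: bij_inv_simps)
        moreover have "E d (inv m v)" using ME[OF Minv[OF m], of "m d" v] v bm by (simp add: bij_inv_simps)
        ultimately obtain k where k: "k \<in> K d" "k (inv m u) = inv m v" using trd unfolding tr_def by blast
        have kM: "k \<in> M" "k \<in> X" "k d = d" using k unfolding K_def by auto
        have "m \<circ> k \<circ> inv m \<in> M" using Mcomp Minv m kM by blast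
        moreover have "m \<circ> k \<circ> inv m \<in> X" using Xconj m kM by blast
        moreover have "(m \<circ> k \<circ> inv m) (m d) = m d" using kM bm by (simp add: bij_inv_simps)
        ultimately have "m \<circ> k \<circ> inv m \<in> K (m d)" unfolding K_def by blast
        moreover have "(m \<circ> k \<circ> inv m) u = v" using k bm by (simp add: bij_inv_simps)
        ultimately show "\<exists>k\<in>K (m d). k u = v" by blast
      qed
    qed
    have nbO: "\<And>m w. m \<in> M \<Longrightarrow> E (m b) w \<Longrightarrow> \<exists>m'\<in>M. w = m' d"
    proof -
      fix m w assume m: "m \<in> M" and w: "E (m b) w"
      have bm: "bij m" using Mbij m .
      have "E b (inv m w)" using ME[OF Minv[OF m], of "m b" w] w bm by (simp add: bij_inv_simps)
      moreover have "E b d" using sym db by blast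
      moreover have "transitive_on (stab M b) (nbhd E b)"
        using lp bV unfolding locally_primitive_def primitive_on_def by blast
      ultimately obtain h where h: "h \<in> stab M b" "h d = inv m w" unfolding transitive_on_def nbhd_def by blast
      have "w = (m \<circ> h) d" using h bm by (simp add: bij_inv_simps)
      moreover have "m \<circ> h \<in> M" using Mcomp m h unfolding stab_def by auto
      ultimately show "\<exists>m'\<in>M. w = m' d" by blast
    qed
    have walk: "\<And>k v. (E ^^ (2*k)) b v \<Longrightarrow> \<exists>x\<in>X. x b = v"
    proof -
      fix k v show "(E ^^ (2*k)) b v \<Longrightarrow> \<exists>x\<in>X. x b = v"
      proof (induction k arbitrary: v)
        case 0 then show ?case using Xid by (metis id_apply relpowp_0_E mult_0_right)
      next
        case (Suc k)
        have "(E ^^ Suc (Suc (2*k))) b v" using Suc.prems by simp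
        then obtain y where y: "(E ^^ Suc (2*k)) b y" "E y v" by (auto elim: relpowp_Suc_E)
        then obtain u where u: "(E ^^ (2*k)) b u" "E u y" by (auto elim: relpowp_Suc_E)
        obtain x where x: "x \<in> X" "x b = u" using Suc.IH u(1) by blast
        obtain m' where m': "m' \<in> M" "y = m' d" using nbO[of x y] x XM u(2) by blast
        have "E y u" using sym u(2) by blast
        then obtain k' where k': "k' \<in> K y" "k' u = v"
          using trM[OF m'(1)] m'(2) y(2) unfolding tr_def by blast
        have "k' \<circ> x \<in> X" using k' x Xcomp unfolding K_def by auto
        moreover have "(k' \<circ> x) b = v" using k' x by simp
        ultimately show ?case by blast
      qed
    qed
    define Mp where "Mp = {m \<in> M. \<forall>v\<in>V. \<exists>k. (E ^^ (2*k)) v (m v)}"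
    have Mpnorm: "normal_sub V Mp Gstar" unfolding normal_sub_def subgrp_def
    proof (intro conjI ballI)
      show "perm_group V Mp" unfolding perm_group_def
      proof (intro conjI ballI)
        fix h assume "h \<in> Mp" then show "perm_on V h" using pg_perm[OF Mpg] unfolding Mp_def by blast
      next
        have "\<forall>v\<in>V. (E ^^ (2*0)) v (id v)" by simp
        then show "id \<in> Mp" unfolding Mp_def using Mid by blast
      next
        fix g h assume g: "g \<in> Mp" and h: "h \<in> Mp"
        show "g \<circ> h \<in> Mp" unfolding Mp_def
        proof (intro CollectI conjI ballI)
          show "g \<circ> h \<in> M" using g h Mcomp unfolding Mp_def by blast
          fix v assume v: "v \<in> V"
          obtain k1 where k1: "(E ^^ (2*k1)) v (h v)" using h v unfolding Mp_def by blast
          have hv: "h v \<in> V" using MV h v unfolding Mp_def by blast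
          obtain k2 where k2: "(E ^^ (2*k2)) (h v) (g (h v))" using g hv unfolding Mp_def by blast
          have "(E ^^ (2*k1 + 2*k2)) v (g (h v))" using relpowp_trans[OF k1 k2] .
          then have "(E ^^ (2*(k1+k2))) v ((g \<circ> h) v)" by (simp add: distrib_left)
          then show "\<exists>k. (E ^^ (2*k)) v ((g \<circ> h) v)" by blast
        qed
      next
        fix h assume h: "h \<in> Mp"
        show "inv h \<in> Mp" unfolding Mp_def
        proof (intro CollectI conjI ballI)
          show "inv h \<in> M" using h Minv unfolding Mp_def by blast
          fix v assume v: "v \<in> V"
          have hM: "h \<in> M" using h unfolding Mp_def by blast
          have u: "inv h v \<in> V" using MV Minv hM v by blast
          obtain k where "(E ^^ (2*k)) (inv h v) (h (inv h v))" using h u unfolding Mp_def by blast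
          then have "(E ^^ (2*k)) (inv h v) v" using Mbij[OF hM] by (simp add: bij_inv_simps)
          then have "(E ^^ (2*k)) v (inv h v)" by (rule relpow_sym[OF sym])
          then show "\<exists>k. (E ^^ (2*k)) v (inv h v)" by blast
        qed
      qed
    next
      show "Mp \<subseteq> Gstar" using MGs unfolding Mp_def by blast
    next
      fix h m assume h: "h \<in> Gstar" and m: "m \<in> Mp"
      show "h \<circ> m \<circ> inv h \<in> Mp" unfolding Mp_def
      proof (intro CollectI conjI ballI)
        show "h \<circ> m \<circ> inv h \<in> M" using Mconj h m unfolding Mp_def by blast
        fix v assume v: "v \<in> V"
        have bh: "bij h" using pg_bij[OF Gspg h] .
        have u: "inv h v \<in> V" using perm_on_in[OF pg_perm[OF Gspg pg_inv[OF Gspg h]] v] .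
        obtain k where "(E ^^ (2*k)) (inv h v) (m (inv h v))" using m u unfolding Mp_def by blast
        then have "(E ^^ (2*k)) (h (inv h v)) (h (m (inv h v)))" by (rule relpow_aut[OF Gsaut[OF h]])
        then have "(E ^^ (2*k)) v ((h \<circ> m \<circ> inv h) v)" using bh by (simp add: bij_inv_simps)
        then show "\<exists>k. (E ^^ (2*k)) v ((h \<circ> m \<circ> inv h) v)" by blast
      qed
    qed
    have MpM: "Mp \<subseteq> M" unfolding Mp_def by blast
    have stabMp: "\<And>m. m \<in> M \<Longrightarrow> m a = a \<Longrightarrow> m \<in> Mp"
    proof -
      fix m assume m: "m \<in> M" and ma: "m a = a"
      show "m \<in> Mp" unfolding Mp_def
      proof (intro CollectI conjI ballI)
        show "m \<in> M" using m .
        fix v assume v: "v \<in> V"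
        have "E\<^sup>*\<^sup>* v a" using conn v aV unfolding connected_graph_def by blast
        then obtain j where j: "(E ^^ j) v a" unfolding rtranclp_power by blast
        have "(E ^^ j) (m v) (m a)" using relpow_aut[OF Maut[OF m] j] .
        then have "(E ^^ j) (m v) a" using ma by simp
        then have "(E ^^ j) a (m v)" by (rule relpow_sym[OF sym])
        then have "(E ^^ (j + j)) v (m v)" using relpowp_trans[OF j] by blast
        then have "(E ^^ (2*j)) v (m v)" by (simp add: mult_2)
        then show "\<exists>k. (E ^^ (2*k)) v (m v)" by blast
      qed
    qed
    from Mmin[OF Mpnorm MpM] show ?thesis
    proof
      assume Mp1: "Mp = {id}"
      show ?thesis
      proof
        fix k assume "k \<in> K a"
        then have "k \<in> M" "k a = a" unfolding K_def by auto
        then have "k \<in> Mp" by (rule stabMp)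
        then show "k = id" using Mp1 by simp
      qed
    next
      assume MpEq: "Mp = M"
      have "\<exists>R :: nat \<Rightarrow> ('a \<Rightarrow> 'a) set.
               (\<forall>i<n. subgrp V (R i) (T i) \<and> R i \<noteq> T i)
             \<and> stab M b \<subseteq> {m \<in> M. \<forall>i<n. proj V T n i m \<in> R i}
             \<and> (\<forall>i<n. proj V T n i ` stab M b = R i)" using PA bV by (rule bspec)
      then obtain R where R: "\<forall>i<n. subgrp V (R i) (T i) \<and> R i \<noteq> T i"
          "\<forall>i<n. proj V T n i ` stab M b = R i" by blast
      have "T i \<subseteq> R i"
      proof
        fix t assume t: "t \<in> T i"
        have tM: "t \<in> M" using t Ti by blast
        then have "t \<in> Mp" using MpEq by simp
        then have "\<forall>v\<in>V. \<exists>k. (E ^^ (2*k)) v (t v)" unfolding Mp_def by blast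
        then obtain k where "(E ^^ (2*k)) b (t b)" using bV by blast
        then obtain x where x: "x \<in> X" "x b = t b" using walk by blast
        have bx: "bij x" using x XM Mbij by blast
        define h where "h = inv x \<circ> t"
        have "h b = b" unfolding h_def using x bx by (simp add: bij_inv_simps flip: x(2))
        moreover have "h \<in> M" unfolding h_def using Minv XM x tM Mcomp by blast
        ultimately have hs: "h \<in> stab M b" unfolding stab_def by blast
        have th: "t = x \<circ> h" unfolding h_def using bx by (simp add: fun_eq_iff bij_inv_simps)
        obtain t1 s1 where ts: "t1 \<in> T i" "s1 \<in> X" "h = t1 \<circ> s1"
          using decomp hs unfolding stab_def by blast
        have ph: "proj V T n i h = t1" using projeq ts by blast
        have bt1: "bij t1" using ts Ti Mbij by blast
        have "t = t1 \<circ> ((inv t1 \<circ> x \<circ> t1) \<circ> s1)" using th ts bt1 by (simp add: fun_eq_iff bij_inv_simps)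
        moreover have "(inv t1 \<circ> x \<circ> t1) \<circ> s1 \<in> X" using Xconj' ts Ti x Xcomp by blast
        ultimately have "proj V T n i t = t1" using projeq ts by blast
        moreover have "proj V T n i t = t" using projeq[of t id t] t Xid by simp
        ultimately have "t = proj V T n i h" using ph by simp
        then show "t \<in> R i" using R(2) iN hs by blast
      qed
      moreover have "R i \<subseteq> T i" using R(1) iN unfolding subgrp_def by blast
      ultimately show ?thesis using R(1) iN by blast
    qed
  qed
  show "inj_on (proj V T n i) (stab M a)"
  proof (rule inj_onI)
    fix x y assume x: "x \<in> stab M a" and y: "y \<in> stab M a" and pxy: "proj V T n i x = proj V T n i y"
    have xM: "x \<in> M" and yM: "y \<in> M" and xa: "x a = a" and ya: "y a = a" using x y unfolding stab_def by auto
    obtain t1 s1 where ts1: "t1 \<in> T i" "s1 \<in> X" "x = t1 \<circ> s1" using decomp xM by blast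
    obtain t2 s2 where ts2: "t2 \<in> T i" "s2 \<in> X" "y = t2 \<circ> s2" using decomp yM by blast
    have "t1 = t2" using projeq ts1 ts2 pxy by metis
    have b: "bij t1" "bij s1" "bij s2" "bij y" using ts1 ts2 Ti XM Mbij yM by blast+
    have "inv y = inv s2 \<circ> inv t1" unfolding ts2(3) \<open>t1 = t2\<close>[symmetric] using b by (simp add: o_inv_distrib)
    then have k: "inv y \<circ> x = inv s2 \<circ> s1" using ts1(3) b by (simp add: fun_eq_iff bij_inv_simps)
    have "inv y \<circ> x \<in> X" unfolding k using ts1 ts2 Xinv Xcomp by blast
    moreover have "inv y \<circ> x \<in> M" using Minv Mcomp xM yM by blast
    moreover have "(inv y \<circ> x) a = a" using xa ya b by (metis bij_inv_simps(1) comp_apply)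
    ultimately have "inv y \<circ> x \<in> K a" unfolding K_def by blast
    then have "inv y \<circ> x = id" using Kid_only by blast
    then show "x = y" using b by (metis bij_inv_simps(2) comp_apply fun_eq_iff id_apply)
  qed
qed
end
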